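(* Let $X$ be a biquandle in which $a\uparrow(b\downarrow c)=a\uparrow b$, $a\Uparrow(b\downarrow c)=a\Uparrow b$, $a\downarrow(b\uparrow c)=a\downarrow b$ and $a\Downarrow(b\uparrow c)=a\Downarrow b$ hold for all $a,b,c\in X$. Then: (1) for all $a,b,c\in X$: $a\uparrow(b\downarrow c)=a\uparrow(b\Downarrow c)=a\uparrow b$, $a\Uparrow(b\downarrow c)=a\Uparrow(b\Downarrow c)=a\Uparrow b$, $a\downarrow(b\uparrow c)=a\downarrow(b\Uparrow c)=a\downarrow b$, $a\Downarrow(b\uparrow c)=a\Downarrow(b\Uparrow c)=a\Downarrow b$; (2) for all $a,b\in X$: $(a\uparrow b)\Uparrow b=(a\Uparrow b)\uparrow b=(a\downarrow b)\Downarrow b=(a\Downarrow b)\downarrow b=a$; (3) every up-type operation commutes with every down-type operation: for all $a,b,c\in X$, $(a\uparrow b)\downarrow c=(a\downarrow c)\uparrow b$, $(a\Uparrow b)\downarrow c=(a\downarrow c)\Uparrow b$, $(a\uparrow b)\Downarrow c=(a\Downarrow c)\uparrow b$, $(a\Uparrow b)\Downarrow c=(a\Downarrow c)\Uparrow b$; (4) for all $a,b,c\in X$: $a\uparrow(b\uparrow c)=((a\Uparrow c)\uparrow b)\uparrow c$ and $a\downarrow(b\downarrow c)=((a\Downarrow c)\downarrow b)\downarrow c$.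
   Context: A biquandle is a set $B$ with two binary operations $\uparrow$ (up) and $\downarrow$ (down), $B$ closed under them, such that: (1) for every $a\in B$ the maps $f_a(x)=x\uparrow a$, $g_a(x)=x\downarrow a$ are bijections $B\to B$, and $S\colon B\times B\to B\times B$, $S(x,y)=(y\downarrow x,\ x\uparrow y)$, is a bijection; (2) for every $a\in B$, $f_a^{-1}(a)=a\downarrow f_a^{-1}(a)$ and $g_a^{-1}(a)=a\uparrow g_a^{-1}(a)$; (3) for all $a,b,c\in B$: $(a\uparrow b)\uparrow c=(a\uparrow(c\downarrow b))\uparrow(b\uparrow c)$; $(a\downarrow b)\uparrow(c\downarrow(b\uparrow a))=(a\uparrow c)\downarrow(b\uparrow(c\downarrow a))$; $(a\downarrow b)\downarrow c=(a\downarrow(c\uparrow b))\downarrow(b\downarrow c)$. The up-bar and down-bar operations $\Uparrow,\Downarrow$ are defined by $S^{-1}(a,b)=(b\Uparrow a,\ a\Downarrow b)$. *)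

theory Defs
  imports Main
begin

definition biS :: "('a \<Rightarrow> 'a \<Rightarrow> 'a) \<Rightarrow> ('a \<Rightarrow> 'a \<Rightarrow> 'a) \<Rightarrow> 'a \<times> 'a \<Rightarrow> 'a \<times> 'a" where
  "biS up dn = (\<lambda>(x, y). (dn y x, up x y))"

definition biquandle :: "'a set \<Rightarrow> ('a \<Rightarrow> 'a \<Rightarrow> 'a) \<Rightarrow> ('a \<Rightarrow> 'a \<Rightarrow> 'a) \<Rightarrow> bool" where
  "biquandle B up dn \<longleftrightarrow>
     (\<forall>a\<in>B. \<forall>b\<in>B. up a b \<in> B \<and> dn a b \<in> B) \<and>
     (\<forall>a\<in>B. bij_betw (\<lambda>x. up x a) B B) \<and>
     (\<forall>a\<in>B. bij_betw (\<lambda>x. dn x a) B B) \<and>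
     bij_betw (biS up dn) (B \<times> B) (B \<times> B) \<and>
     (\<forall>a\<in>B. the_inv_into B (\<lambda>x. up x a) a = dn a (the_inv_into B (\<lambda>x. up x a) a)) \<and>
     (\<forall>a\<in>B. the_inv_into B (\<lambda>x. dn x a) a = up a (the_inv_into B (\<lambda>x. dn x a) a)) \<and>
     (\<forall>a\<in>B. \<forall>b\<in>B. \<forall>c\<in>B.
        up (up a b) c = up (up a (dn c b)) (up b c) \<and>
        up (dn a b) (dn c (up b a)) = dn (up a c) (up b (dn c a)) \<and>
        dn (dn a b) c = dn (dn a (up c b)) (dn b c))"

text \<open>Up-bar and down-bar: S^{-1}(a,b) = (b \<Up> a, a \<Down> b).
  Hence a \<Up> b = fst (S^{-1}(b,a)) and a \<Down> b = snd (S^{-1}(a,b)).\<close>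

definition upbar :: "'a set \<Rightarrow> ('a \<Rightarrow> 'a \<Rightarrow> 'a) \<Rightarrow> ('a \<Rightarrow> 'a \<Rightarrow> 'a) \<Rightarrow> 'a \<Rightarrow> 'a \<Rightarrow> 'a" where
  "upbar B up dn a b = fst (the_inv_into (B \<times> B) (biS up dn) (b, a))"

definition dnbar :: "'a set \<Rightarrow> ('a \<Rightarrow> 'a \<Rightarrow> 'a) \<Rightarrow> ('a \<Rightarrow> 'a \<Rightarrow> 'a) \<Rightarrow> 'a \<Rightarrow> 'a \<Rightarrow> 'a" where
  "dnbar B up dn a b = snd (the_inv_into (B \<times> B) (biS up dn) (a, b))"

end

theory Submission
  imports Defs
begin

theorem mainTheorem8:
  fixes B :: "'a set" and up dn :: "'a \<Rightarrow> 'a \<Rightarrow> 'a"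
  defines "ub \<equiv> upbar B up dn" and "db \<equiv> dnbar B up dn"
  assumes bq: "biquandle B up dn"
    and h1: "\<forall>a\<in>B. \<forall>b\<in>B. \<forall>c\<in>B. up a (dn b c) = up a b"
    and h2: "\<forall>a\<in>B. \<forall>b\<in>B. \<forall>c\<in>B. ub a (dn b c) = ub a b"
    and h3: "\<forall>a\<in>B. \<forall>b\<in>B. \<forall>c\<in>B. dn a (up b c) = dn a b"
    and h4: "\<forall>a\<in>B. \<forall>b\<in>B. \<forall>c\<in>B. db a (up b c) = db a b"
  shows "(\<forall>a\<in>B. \<forall>b\<in>B. \<forall>c\<in>B.
            up a (dn b c) = up a (db b c) \<and> up a (db b c) = up a b \<and>
            ub a (dn b c) = ub a (db b c) \<and> ub a (db b c) = ub a b \<and>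
            dn a (up b c) = dn a (ub b c) \<and> dn a (ub b c) = dn a b \<and>
            db a (up b c) = db a (ub b c) \<and> db a (ub b c) = db a b)
       \<and> (\<forall>a\<in>B. \<forall>b\<in>B.
            ub (up a b) b = a \<and> up (ub a b) b = a \<and>
            db (dn a b) b = a \<and> dn (db a b) b = a)
       \<and> (\<forall>a\<in>B. \<forall>b\<in>B. \<forall>c\<in>B.
            dn (up a b) c = up (dn a c) b \<and>
            dn (ub a b) c = ub (dn a c) b \<and>
            db (up a b) c = up (db a c) b \<and>
            db (ub a b) c = ub (db a c) b)
       \<and> (\<forall>a\<in>B. \<forall>b\<in>B. \<forall>c\<in>B.
            up a (up b c) = up (up (ub a c) b) c \<and>
            dn a (dn b c) = dn (dn (db a c) b) c)"
proof -
  let ?T = "the_inv_into (B \<times> B) (biS up dn)"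
  have cl: "\<And>a b. a \<in> B \<Longrightarrow> b \<in> B \<Longrightarrow> up a b \<in> B \<and> dn a b \<in> B"
    using bq unfolding biquandle_def by blast
  have bij: "bij_betw (biS up dn) (B \<times> B) (B \<times> B)" using bq unfolding biquandle_def by blast
  have inj: "inj_on (biS up dn) (B \<times> B)" using bij bij_betw_imp_inj_on by blast
  have sur: "biS up dn ` (B \<times> B) = B \<times> B" using bij bij_betw_imp_surj_on by blast
  have ax: "\<And>a b c. a \<in> B \<Longrightarrow> b \<in> B \<Longrightarrow> c \<in> B \<Longrightarrow>
        up (up a b) c = up (up a (dn c b)) (up b c) \<and>
        up (dn a b) (dn c (up b a)) = dn (up a c) (up b (dn c a)) \<and>
        dn (dn a b) c = dn (dn a (up c b)) (dn b c)"
    using bq unfolding biquandle_def by blast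
  have Tin: "\<And>a b. a \<in> B \<Longrightarrow> b \<in> B \<Longrightarrow> ?T (a, b) \<in> B \<times> B"
    using the_inv_into_into[OF inj] sur by (metis SigmaI order_refl)
  have Tf: "\<And>a b. a \<in> B \<Longrightarrow> b \<in> B \<Longrightarrow> biS up dn (?T (a, b)) = (a, b)"
    using f_the_inv_into_f[OF inj] sur by (metis SigmaI)
  have fT: "\<And>x y. x \<in> B \<Longrightarrow> y \<in> B \<Longrightarrow> ?T (biS up dn (x, y)) = (x, y)"
    using the_inv_into_f_f[OF inj] by blast
  have ubdef: "\<And>b a. ub b a = fst (?T (a, b))" unfolding ub_def upbar_def by simp
  have dbdef: "\<And>a b. db a b = snd (?T (a, b))" unfolding db_def dnbar_def by simp
  have ubB: "\<And>a b. a \<in> B \<Longrightarrow> b \<in> B \<Longrightarrow> ub a b \<in> B"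
    using Tin ubdef by (metis mem_Times_iff)
  have dbB: "\<And>a b. a \<in> B \<Longrightarrow> b \<in> B \<Longrightarrow> db a b \<in> B"
    using Tin dbdef by (metis mem_Times_iff)
  have A: "\<And>a b. a \<in> B \<Longrightarrow> b \<in> B \<Longrightarrow> dn (db a b) (ub b a) = a \<and> up (ub b a) (db a b) = b"
  proof -
    fix a b assume "a \<in> B" "b \<in> B"
    then have "biS up dn (ub b a, db a b) = (a, b)" using Tf ubdef dbdef by (metis prod.collapse)
    then show "dn (db a b) (ub b a) = a \<and> up (ub b a) (db a b) = b" by (simp add: biS_def)
  qed
  have C: "\<And>x y. x \<in> B \<Longrightarrow> y \<in> B \<Longrightarrow> ub (up x y) (dn y x) = x \<and> db (dn y x) (up x y) = y"
  proof -
    fix x y assume "x \<in> B" "y \<in> B"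
    then have "?T (dn y x, up x y) = (x, y)" using fT by (simp add: biS_def)
    then show "ub (up x y) (dn y x) = x \<and> db (dn y x) (up x y) = y" using ubdef dbdef by simp
  qed
  have p1a: "\<And>a b c. a \<in> B \<Longrightarrow> b \<in> B \<Longrightarrow> c \<in> B \<Longrightarrow> up a (db b c) = up a b"
    by (metis A h1 ubB dbB)
  have p1b: "\<And>a b c. a \<in> B \<Longrightarrow> b \<in> B \<Longrightarrow> c \<in> B \<Longrightarrow> ub a (db b c) = ub a b"
    by (metis A h2 ubB dbB)
  have p1c: "\<And>a b c. a \<in> B \<Longrightarrow> b \<in> B \<Longrightarrow> c \<in> B \<Longrightarrow> dn a (ub b c) = dn a b"
    by (metis A h3 ubB dbB)
  have p1d: "\<And>a b c. a \<in> B \<Longrightarrow> b \<in> B \<Longrightarrow> c \<in> B \<Longrightarrow> db a (ub b c) = db a b"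
    by (metis A h4 ubB dbB)
  have p2a: "\<And>a b. a \<in> B \<Longrightarrow> b \<in> B \<Longrightarrow> ub (up a b) b = a"
    by (metis C h2 cl)
  have p2b: "\<And>a b. a \<in> B \<Longrightarrow> b \<in> B \<Longrightarrow> db (dn a b) b = a"
    by (metis C h4 cl)
  have p2c: "\<And>a b. a \<in> B \<Longrightarrow> b \<in> B \<Longrightarrow> up (ub a b) b = a"
    by (metis A p1a ubB dbB)
  have p2d: "\<And>a b. a \<in> B \<Longrightarrow> b \<in> B \<Longrightarrow> dn (db a b) b = a"
    by (metis A p1c ubB dbB)
  have p3a: "\<And>a b c. a \<in> B \<Longrightarrow> b \<in> B \<Longrightarrow> c \<in> B \<Longrightarrow> up (dn a b) c = dn (up a c) b"
  proof -
    fix a b c assume H: "a \<in> B" "b \<in> B" "c \<in> B"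
    have "up (dn a b) (dn c (up b a)) = dn (up a c) (up b (dn c a))" using ax[OF H] by blast
    then show "up (dn a b) c = dn (up a c) b" using H h1 h3 cl by metis
  qed
  have p3b: "\<And>a b c. a \<in> B \<Longrightarrow> b \<in> B \<Longrightarrow> c \<in> B \<Longrightarrow> dn (ub a b) c = ub (dn a c) b"
  proof -
    fix a b c assume H: "a \<in> B" "b \<in> B" "c \<in> B"
    define x where "x = ub a b"
    have xB: "x \<in> B" using H ubB x_def by blast
    have "a = up x b" using p2c H x_def by simp
    then have "ub (dn a c) b = ub (up (dn x c) b) b" using p3a xB H by simp
    also have "\<dots> = dn x c" using p2a xB H cl by blast
    finally show "dn (ub a b) c = ub (dn a c) b" using x_def by simp
  qed
  have p3c: "\<And>a b c. a \<in> B \<Longrightarrow> b \<in> B \<Longrightarrow> c \<in> B \<Longrightarrow> db (up a b) c = up (db a c) b"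
  proof -
    fix a b c assume H: "a \<in> B" "b \<in> B" "c \<in> B"
    define y where "y = db a c"
    have yB: "y \<in> B" using H dbB y_def by blast
    have "a = dn y c" using p2d H y_def by simp
    then have "db (up a b) c = db (dn (up y b) c) c" using p3a yB H by simp
    also have "\<dots> = up y b" using p2b yB H cl by blast
    finally show "db (up a b) c = up (db a c) b" using y_def by simp
  qed
  have p3d: "\<And>a b c. a \<in> B \<Longrightarrow> b \<in> B \<Longrightarrow> c \<in> B \<Longrightarrow> db (ub a b) c = ub (db a c) b"
  proof -
    fix a b c assume H: "a \<in> B" "b \<in> B" "c \<in> B"
    define x where "x = ub (db a c) b"
    have xB: "x \<in> B" using H dbB ubB x_def by blast
    have "up x b = db a c" using p2c H dbB x_def by simp
    then have "dn (up x b) c = a" using p2d H by simp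
    then have "up (dn x c) b = a" using p3a xB H by simp
    then have "ub a b = dn x c" using p2a xB H cl by metis
    then show "db (ub a b) c = ub (db a c) b" using p2b xB H x_def by simp
  qed
  have p4a: "\<And>a b c. a \<in> B \<Longrightarrow> b \<in> B \<Longrightarrow> c \<in> B \<Longrightarrow> up a (up b c) = up (up (ub a c) b) c"
  proof -
    fix a b c assume H: "a \<in> B" "b \<in> B" "c \<in> B"
    have xB: "ub a c \<in> B" using H ubB by blast
    have "up (up (ub a c) b) c = up (up (ub a c) (dn c b)) (up b c)" using ax[OF xB H(2,3)] by blast
    also have "\<dots> = up (up (ub a c) c) (up b c)" using h1 xB H by simp
    also have "\<dots> = up a (up b c)" using p2c H by simp
    finally show "up a (up b c) = up (up (ub a c) b) c" by simp
  qed
  have p4b: "\<And>a b c. a \<in> B \<Longrightarrow> b \<in> B \<Longrightarrow> c \<in> B \<Longrightarrow> dn a (dn b c) = dn (dn (db a c) b) c"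
  proof -
    fix a b c assume H: "a \<in> B" "b \<in> B" "c \<in> B"
    have xB: "db a c \<in> B" using H dbB by blast
    have "dn (dn (db a c) b) c = dn (dn (db a c) (up c b)) (dn b c)" using ax[OF xB H(2,3)] by blast
    also have "\<dots> = dn (dn (db a c) c) (dn b c)" using h3 xB H by simp
    also have "\<dots> = dn a (dn b c)" using p2d H by simp
    finally show "dn a (dn b c) = dn (dn (db a c) b) c" by simp
  qed
  show ?thesis
    using h1 h2 h3 h4 p1a p1b p1c p1d p2a p2b p2c p2d p4a p4b
      p3a[symmetric] p3b p3c p3d by simp
qed

end
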